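(* Let $r>5$ with $r\not\equiv 0\pmod 3$, and let $C_r$ be the directed cycle of length $r$. Then $3\leq\chi^*_o(C_r)\leq 4$.
   Context: The directed cycle $C_r$ has vertices $u_i$, $i\in\mathbb{Z}/r\mathbb{Z}$, and arcs $u_iu_{i+1}$. For a set $S$ of $k$ colors, a $b$-fold oriented $k$-coloring of an oriented graph $G$ is a map $f$ from $V(G)$ to the $b$-element subsets of $S$ such that (i) $f(x)\cap f(y)=\emptyset$ for every arc $xy$, and (ii) for all arcs $xy, zw$, $f(x)\cap f(w)\neq\emptyset$ implies $f(y)\cap f(z)=\emptyset$. $\chi^b_o(G)$ is the minimum such $k$, and $\chi^*_o(G)=\lim_{b\to\infty}\chi^b_o(G)/b=\inf_{b\ge1}\chi^b_o(G)/b$. *)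

theory Defs
  imports Complex_Main
begin

definition b_fold_oriented_coloring ::
  "'a set \<Rightarrow> ('a \<times> 'a) set \<Rightarrow> nat \<Rightarrow> nat \<Rightarrow> ('a \<Rightarrow> nat set) \<Rightarrow> bool" where
  "b_fold_oriented_coloring V A b k f \<longleftrightarrow>
     (\<forall>x\<in>V. f x \<subseteq> {..<k} \<and> card (f x) = b) \<and>
     (\<forall>(x,y)\<in>A. f x \<inter> f y = {}) \<and>
     (\<forall>(x,y)\<in>A. \<forall>(z,w)\<in>A. f x \<inter> f w \<noteq> {} \<longrightarrow> f y \<inter> f z = {})"

definition chi_o_b :: "'a set \<Rightarrow> ('a \<times> 'a) set \<Rightarrow> nat \<Rightarrow> nat" where
  "chi_o_b V A b = (LEAST k. \<exists>f. b_fold_oriented_coloring V A b k f)"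

definition chi_o_frac :: "'a set \<Rightarrow> ('a \<times> 'a) set \<Rightarrow> real" where
  "chi_o_frac V A = (INF b\<in>{1..}. real (chi_o_b V A b) / real b)"

definition cycle_vertices :: "nat \<Rightarrow> nat set" where
  "cycle_vertices r = {..<r}"

definition cycle_arcs :: "nat \<Rightarrow> (nat \<times> nat) set" where
  "cycle_arcs r = {(i, (i + 1) mod r) | i. i < r}"

end

theory Submission
  imports Defs
begin

definition TT :: "(nat \<times> nat) set" where
  "TT = {(0,1),(1,2),(2,0),(2,3),(3,0)}"

lemma TT_mod3: "(k mod 3, Suc k mod 3) \<in> TT"
proof -
  have "k mod 3 = 0 \<or> k mod 3 = 1 \<or> k mod 3 = 2" by arith
  then show ?thesis unfolding TT_def by (auto simp: mod_Suc)
qed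

lemma TT_mod4: "(k mod 4, Suc k mod 4) \<in> TT"
proof -
  have "k mod 4 = 0 \<or> k mod 4 = 1 \<or> k mod 4 = 2 \<or> k mod 4 = 3" by arith
  then show ?thesis unfolding TT_def by (auto simp: mod_Suc)
qed

lemma TT_lt4: "(a,b) \<in> TT \<Longrightarrow> a < 4 \<and> b < 4 \<and> a \<noteq> b \<and> (b,a) \<notin> TT"
  unfolding TT_def by (elim insertE emptyE) simp_all

lemma decomp:
  fixes r :: nat
  assumes "r > 5" and "\<not> (3 dvd r)"
  shows "\<exists>m n. r = 3*m + 4*n \<and> n \<ge> 1"
proof -
  define q where "q = r div 3"
  have e: "r = 3*q + r mod 3" unfolding q_def by simp
  have "r mod 3 = 1 \<or> r mod 3 = 2" using assms(2) by arith
  then show ?thesis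
  proof
    assume h: "r mod 3 = 1"
    then have "r = 3*q + 1" using e by simp
    then have "r = 3*(q-1) + 4*1" using assms(1) by linarith
    then show ?thesis by (intro exI[of _ "q-1"] exI[of _ 1]) simp
  next
    assume h: "r mod 3 = 2"
    then have "r = 3*q + 2" using e by simp
    then have "r = 3*(q-2) + 4*2" using assms(1) by linarith
    then show ?thesis by (intro exI[of _ "q-2"] exI[of _ 2]) simp
  qed
qed

lemma base_coloring:
  fixes r :: nat
  assumes "r > 5" and "\<not> (3 dvd r)"
  shows "\<exists>c. (\<forall>i<r. c i < (4::nat)) \<and> (\<forall>(x,y)\<in>cycle_arcs r. (c x, c y) \<in> TT)"
proof -
  obtain m n where r: "r = 3*m + 4*n" and n: "n \<ge> 1" using decomp[OF assms] by blast
  define c where "c i = (if i < 3*m then i mod 3 else (i - 3*m) mod 4)" for i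
  have c0: "c 0 = 0" unfolding c_def by simp
  have "(c i, c ((i+1) mod r)) \<in> TT" if i: "i < r" for i
  proof -
    consider "i + 1 < 3*m" | "i + 1 = 3*m" | "3*m \<le> i \<and> i + 1 < r" | "i + 1 = r"
      using i by linarith
    then show ?thesis
    proof cases
      case 1
      then have "Suc i < r" using r n by linarith
      then have "(i+1) mod r = Suc i" by simp
      then show ?thesis using 1 TT_mod3[of i] unfolding c_def by simp
    next
      case 2
      then have "Suc i < r" using r n by linarith
      then have "(i+1) mod r = Suc i" by simp
      moreover have "i mod 3 = 2" using 2 by arith
      ultimately show ?thesis using 2 unfolding c_def TT_def by simp
    next
      case 3
      then have "(i+1) mod r = Suc i" using i by simp
      moreover have "Suc i - 3*m = Suc (i - 3*m)" using 3 by arith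
      ultimately show ?thesis using 3 TT_mod4[of "i - 3*m"] unfolding c_def by simp
    next
      case 4
      then have "(i+1) mod r = 0" by simp
      moreover have "i - 3*m = 4*(n-1) + 3" using 4 r n by linarith
      then have "(i - 3*m) mod 4 = 3" by simp
      moreover have "\<not> i < 3*m" using 4 r n by arith
      ultimately show ?thesis using c0 unfolding c_def TT_def by simp
    qed
  qed
  moreover have "c i < 4" for i unfolding c_def by auto
  ultimately show ?thesis unfolding cycle_arcs_def by (intro exI[of _ c]) auto
qed

lemma upper_b:
  fixes r :: nat
  assumes "r > 5" and "\<not> (3 dvd r)" and b: "b \<ge> 1"
  shows "\<exists>f. b_fold_oriented_coloring (cycle_vertices r) (cycle_arcs r) b (4*b) f"
proof -
  obtain c where c4: "\<forall>i<r. c i < (4::nat)" and cT: "\<forall>(x,y)\<in>cycle_arcs r. (c x, c y) \<in> TT"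
    using base_coloring[OF assms(1,2)] by blast
  define f where "f x = {b * c x ..< b * c x + b}" for x
  have inter: "f x \<inter> f y = {} \<longleftrightarrow> c x \<noteq> c y" for x y
  proof
    assume "f x \<inter> f y = {}"
    then show "c x \<noteq> c y" using b unfolding f_def by auto
  next
    assume ne: "c x \<noteq> c y"
    show "f x \<inter> f y = {}"
    proof (cases "c x < c y")
      case True
      then have "b * c x + b \<le> b * c y"
        by (metis Suc_leI mult_Suc_right add.commute mult_le_mono2)
      then show ?thesis unfolding f_def by auto
    next
      case False
      then have "c y < c x" using ne by arith
      then have "b * c y + b \<le> b * c x"
        by (metis Suc_leI mult_Suc_right add.commute mult_le_mono2)
      then show ?thesis unfolding f_def by auto
    qed
  qed
  have "f x \<subseteq> {..<4*b}" if "x < r" for x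
  proof -
    have "c x + 1 \<le> 4" using c4 that by auto
    then have "b * c x + b \<le> 4 * b"
      by (metis add.commute mult.commute mult_Suc_right mult_le_mono2 Suc_eq_plus1)
    then show ?thesis unfolding f_def by (auto intro: less_le_trans)
  qed
  moreover have "card (f x) = b" for x unfolding f_def by simp
  moreover have "\<forall>(x,y)\<in>cycle_arcs r. f x \<inter> f y = {}"
  proof (clarify)
    fix x y
    assume "(x,y) \<in> cycle_arcs r"
    then have "(c x, c y) \<in> TT" using cT by auto
    then have "c x \<noteq> c y" using TT_lt4 by blast
    then show "f x \<inter> f y = {}" using inter by blast
  qed
  moreover have "\<forall>(x,y)\<in>cycle_arcs r. \<forall>(z,w)\<in>cycle_arcs r. f x \<inter> f w \<noteq> {} \<longrightarrow> f y \<inter> f z = {}"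
  proof -
    have False if a1: "(x,y) \<in> cycle_arcs r" and a2: "(z,w) \<in> cycle_arcs r"
      and h1: "f x \<inter> f w \<noteq> {}" and h2: "f y \<inter> f z \<noteq> {}" for x y z w
    proof -
      have "c x = c w" "c y = c z" using h1 h2 inter by auto
      moreover have "(c x, c y) \<in> TT" "(c z, c w) \<in> TT" using a1 a2 cT by auto
      ultimately show False using TT_lt4 by auto
    qed
    then show ?thesis by blast
  qed
  ultimately have "b_fold_oriented_coloring (cycle_vertices r) (cycle_arcs r) b (4*b) f"
    unfolding b_fold_oriented_coloring_def cycle_vertices_def by auto
  then show ?thesis by blast
qed

lemma lower_b:
  fixes r :: nat
  assumes "r > 5" and b: "b \<ge> 1"
    and f: "b_fold_oriented_coloring (cycle_vertices r) (cycle_arcs r) b k f"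
  shows "3 * b \<le> k"
proof -
  have a01: "(0,1) \<in> cycle_arcs r" and a12: "(1,2) \<in> cycle_arcs r"
    using assms(1) unfolding cycle_arcs_def by force+
  have v: "0 \<in> cycle_vertices r" "1 \<in> cycle_vertices r" "2 \<in> cycle_vertices r"
    using assms(1) unfolding cycle_vertices_def by auto
  have sub: "f i \<subseteq> {..<k}" and cd: "card (f i) = b" if "i \<in> cycle_vertices r" for i
    using f that unfolding b_fold_oriented_coloring_def by auto
  have d01: "f 0 \<inter> f 1 = {}" and d12: "f 1 \<inter> f 2 = {}"
    using f a01 a12 unfolding b_fold_oriented_coloring_def by fast+
  have ne1: "f 1 \<noteq> {}" using cd[OF v(2)] b by auto
  have d02: "f 0 \<inter> f 2 = {}"
    using f a01 a12 ne1 unfolding b_fold_oriented_coloring_def by fastforce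
  have fin: "finite (f i)" if "i \<in> cycle_vertices r" for i
    using sub[OF that] finite_subset by blast
  have "card (f 0 \<union> f 1 \<union> f 2) = card (f 0) + card (f 1) + card (f 2)"
    using fin[OF v(1)] fin[OF v(2)] fin[OF v(3)] d01 d12 d02
    by (simp add: card_Un_disjoint Int_Un_distrib2)
  also have "\<dots> = 3 * b" using cd v by simp
  finally have "card (f 0 \<union> f 1 \<union> f 2) = 3 * b" .
  moreover have "f 0 \<union> f 1 \<union> f 2 \<subseteq> {..<k}" using sub v by auto
  ultimately show ?thesis by (metis card_lessThan card_mono finite_lessThan)
qed

theorem lemma1:
  fixes r :: nat
  assumes "r > 5" and "\<not> (3 dvd r)"
  shows "3 \<le> chi_o_frac (cycle_vertices r) (cycle_arcs r) \<and>
         chi_o_frac (cycle_vertices r) (cycle_arcs r) \<le> 4"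
proof -
  let ?g = "\<lambda>b. real (chi_o_b (cycle_vertices r) (cycle_arcs r) b) / real b"
  have bounds: "3 * b \<le> chi_o_b (cycle_vertices r) (cycle_arcs r) b \<and>
      chi_o_b (cycle_vertices r) (cycle_arcs r) b \<le> 4 * b" if b: "b \<ge> 1" for b
  proof -
    obtain f where f: "b_fold_oriented_coloring (cycle_vertices r) (cycle_arcs r) b (4*b) f"
      using upper_b[OF assms b] by blast
    have "\<exists>f. b_fold_oriented_coloring (cycle_vertices r) (cycle_arcs r) b
        (chi_o_b (cycle_vertices r) (cycle_arcs r) b) f"
      unfolding chi_o_b_def by (rule LeastI_ex) (use f in blast)
    then obtain g where "b_fold_oriented_coloring (cycle_vertices r) (cycle_arcs r) b
        (chi_o_b (cycle_vertices r) (cycle_arcs r) b) g" by blast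
    then have "3 * b \<le> chi_o_b (cycle_vertices r) (cycle_arcs r) b"
      using lower_b[OF assms(1) b] by blast
    moreover have "chi_o_b (cycle_vertices r) (cycle_arcs r) b \<le> 4 * b"
      unfolding chi_o_b_def by (rule Least_le) (use f in blast)
    ultimately show ?thesis by blast
  qed
  have g3: "3 \<le> ?g b" if "b \<in> {1..}" for b
  proof -
    have "3*b \<le> chi_o_b (cycle_vertices r) (cycle_arcs r) b"
      using bounds[of b] that by auto
    then have "real (3*b) \<le> real (chi_o_b (cycle_vertices r) (cycle_arcs r) b)"
      by (simp only: of_nat_le_iff)
    then show ?thesis using that by (simp add: field_simps)
  qed
  have g4: "?g 1 \<le> 4" using bounds[of 1] by simp
  have "3 \<le> chi_o_frac (cycle_vertices r) (cycle_arcs r)"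
    unfolding chi_o_frac_def by (rule cINF_greatest) (use g3 in auto)
  moreover have "chi_o_frac (cycle_vertices r) (cycle_arcs r) \<le> ?g 1"
    unfolding chi_o_frac_def
  proof (rule cINF_lower)
    show "bdd_below (?g ` {1..})" using g3 by (intro bdd_belowI[of _ 3]) auto
  qed simp
  ultimately show ?thesis using g4 by linarith
qed

end
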